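(* Let $G$ be a small category and $X$ a set with a partial category action by $G$. Let $\overline{X} = \{(g,x)\in{\rm mor}(G)\times X\mid d(g)\cdot x\text{ is defined}\}$ and let $\sim$ be the relation on $\overline{X}$ defined below. If $(g,x),(g',x')\in\overline{X}$ satisfy $(g,x)\sim(g',x')$, then for every $p\in{\rm mor}(G)$ with $(p,g),(p,g')\in G^2$ we have $(pg,x)\sim(pg',x')$.
   Context: Conventions: $G$ is a small category; objects are identified with their identity morphisms, so ${\rm ob}(G)\subseteq{\rm mor}(G)$; $d(g), c(g)$ are domain and codomain, $G^2=\{(g,h)\mid d(g)=c(h)\}$. A partial category action by $G$ on $X$ is a partial function ${\rm mor}(G)\times X\to X$, $(g,x)\mapsto g\cdot x$ where defined, such that: (C1) for every $x$ there is $e\in{\rm ob}(G)$ with $e\cdot x$ defined, and whenever $f\in{\rm ob}(G)$ and $f\cdot x$ is defined, $f\cdot x=x$; (C2) if $g\cdot x$ is defined then $d(g)\cdot x$ is defined; (C3) if $(g,h)\in G^2$ and $h\cdot x$ is defined, then $(gh)\cdot x$ is defined iff $g\cdot(h\cdot x)$ is defined, and then they are equal. The relation $\sim$ on $\overline{X}$: $(g,x)\sim(g',x')$ if either (i) there is $h\in{\rm mor}(G)$ with $(g',h)\in G^2$, $h\cdot x$ defined, $g = g'h$ and $x' = h\cdot x$; or (ii) $x = x'$, $g,g'\in{\rm ob}(G)$, and both $g\cdot x$ and $g'\cdot x'$ are defined. *)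

theory Defs
  imports Main
begin

(* A small category: morphism set, object set (objects identified with identity
   morphisms), domain, codomain, composition (meaningful on composable pairs). *)
record ('m) cat =
  Mor :: "'m set"
  Ob  :: "'m set"
  dom :: "'m \<Rightarrow> 'm"
  cod :: "'m \<Rightarrow> 'm"
  comp :: "'m \<Rightarrow> 'm \<Rightarrow> 'm"

definition composable :: "'m cat \<Rightarrow> 'm \<Rightarrow> 'm \<Rightarrow> bool" where
  "composable G g h \<longleftrightarrow> g \<in> Mor G \<and> h \<in> Mor G \<and> dom G g = cod G h"

definition category :: "'m cat \<Rightarrow> bool" where
  "category G \<longleftrightarrow>
     Ob G \<subseteq> Mor G \<and>
     (\<forall>g\<in>Mor G. dom G g \<in> Ob G \<and> cod G g \<in> Ob G) \<and>
     (\<forall>e\<in>Ob G. dom G e = e \<and> cod G e = e) \<and>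
     (\<forall>g h. composable G g h \<longrightarrow>
        comp G g h \<in> Mor G \<and> dom G (comp G g h) = dom G h \<and> cod G (comp G g h) = cod G g) \<and>
     (\<forall>g\<in>Mor G. comp G g (dom G g) = g \<and> comp G (cod G g) g = g) \<and>
     (\<forall>f g h. composable G f g \<longrightarrow> composable G g h \<longrightarrow>
        comp G (comp G f g) h = comp G f (comp G g h))"

definition partial_cat_action :: "'m cat \<Rightarrow> 'x set \<Rightarrow> ('m \<Rightarrow> 'x \<Rightarrow> 'x option) \<Rightarrow> bool" where
  "partial_cat_action G X act \<longleftrightarrow>
     (\<forall>g x. act g x \<noteq> None \<longrightarrow> g \<in> Mor G \<and> x \<in> X \<and> the (act g x) \<in> X) \<and>
     (\<forall>x\<in>X. (\<exists>e\<in>Ob G. act e x \<noteq> None) \<and>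
              (\<forall>f\<in>Ob G. act f x \<noteq> None \<longrightarrow> act f x = Some x)) \<and>
     (\<forall>g x. act g x \<noteq> None \<longrightarrow> act (dom G g) x \<noteq> None) \<and>
     (\<forall>g h x. composable G g h \<longrightarrow> act h x \<noteq> None \<longrightarrow>
        (act (comp G g h) x \<noteq> None \<longleftrightarrow> act g (the (act h x)) \<noteq> None) \<and>
        (act (comp G g h) x \<noteq> None \<longrightarrow> act (comp G g h) x = act g (the (act h x))))"

definition Xbar :: "'m cat \<Rightarrow> 'x set \<Rightarrow> ('m \<Rightarrow> 'x \<Rightarrow> 'x option) \<Rightarrow> ('m \<times> 'x) set" where
  "Xbar G X act = {(g, x). g \<in> Mor G \<and> x \<in> X \<and> act (dom G g) x \<noteq> None}"

definition sim_rel :: "'m cat \<Rightarrow> ('m \<Rightarrow> 'x \<Rightarrow> 'x option) \<Rightarrow> 'm \<times> 'x \<Rightarrow> 'm \<times> 'x \<Rightarrow> bool" where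
  "sim_rel G act a b \<longleftrightarrow> (case a of (g, x) \<Rightarrow> case b of (g', x') \<Rightarrow>
     (\<exists>h\<in>Mor G. composable G g' h \<and> act h x \<noteq> None \<and> g = comp G g' h \<and> act h x = Some x') \<or>
     (x = x' \<and> g \<in> Ob G \<and> g' \<in> Ob G \<and> act g x \<noteq> None \<and> act g' x' \<noteq> None))"

end

theory Submission
  imports Defs
begin

lemma catfacts: assumes "category G" shows "Ob G \<subseteq> Mor G" "\<And>g. g\<in>Mor G \<Longrightarrow> dom G g \<in> Ob G \<and> cod G g \<in> Ob G"
    "\<And>e. e\<in>Ob G \<Longrightarrow> dom G e = e \<and> cod G e = e"
    "\<And>g h. composable G g h \<Longrightarrow> comp G g h \<in> Mor G \<and> dom G (comp G g h) = dom G h \<and> cod G (comp G g h) = cod G g"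
    "\<And>g. g\<in>Mor G \<Longrightarrow> comp G g (dom G g) = g \<and> comp G (cod G g) g = g"
    "\<And>f g h. composable G f g \<Longrightarrow> composable G g h \<Longrightarrow> comp G (comp G f g) h = comp G f (comp G g h)"
    using assms(1) unfolding category_def 
    apply -
    apply (elim conjE; assumption)
    apply (elim conjE; blast)
    apply (elim conjE; blast)
    apply (elim conjE; blast)
    apply (elim conjE; blast)
    apply (elim conjE; blast)
    done

theorem proposition3p6:
  fixes G :: "'m cat" and X :: "'x set" and act :: "'m \<Rightarrow> 'x \<Rightarrow> 'x option"
  assumes "category G"
    and "partial_cat_action G X act"
    and "(g, x) \<in> Xbar G X act" and "(g', x') \<in> Xbar G X act"
    and "sim_rel G act (g, x) (g', x')"
    and "composable G p g" and "composable G p g'"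
  shows "sim_rel G act (comp G p g, x) (comp G p g', x')"
proof -
  note C = catfacts[OF assms(1)]
  have A: "\<And>x. x\<in>X \<Longrightarrow> (\<forall>f\<in>Ob G. act f x \<noteq> None \<longrightarrow> act f x = Some x)"
    using assms(2) unfolding partial_cat_action_def by blast
  have xX: "x \<in> X" using assms(3) unfolding Xbar_def by auto
  from assms(5) consider
    (i) h where "h\<in>Mor G" "composable G g' h" "act h x \<noteq> None" "g = comp G g' h" "act h x = Some x'"
  | (ii) "x = x'" "g \<in> Ob G" "g' \<in> Ob G" "act g x \<noteq> None" "act g' x' \<noteq> None"
    unfolding sim_rel_def by auto
  then show ?thesis
  proof cases
    case i
    have "comp G p g = comp G (comp G p g') h" using i(2,4) assms(7) C(6)[of p g' h] by simp
    moreover have "composable G (comp G p g') h"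
      using i(2) assms(7) C(4)[of p g'] unfolding composable_def by simp
    ultimately show ?thesis using i(1,3,5) unfolding sim_rel_def by blast
  next
    case ii
    have pM: "p \<in> Mor G" using assms(6) unfolding composable_def by blast
    have dg: "dom G p = cod G g" using assms(6) unfolding composable_def by blast
    have cg: "cod G g = g" using C(3)[OF ii(2)] by blast
    have dg': "dom G p = cod G g'" using assms(7) unfolding composable_def by blast
    have cg': "cod G g' = g'" using C(3)[OF ii(3)] by blast
    have d1: "dom G p = g" using dg cg by (rule trans)
    have gg: "g = g'" using d1 dg' cg' by metis
    have cp: "comp G p (dom G p) = p" using C(5)[OF pM] by blast
    have e1: "comp G p g = p" using cp d1 by metis
    have e2: "comp G p g' = p" using e1 gg by metis
    have "act g x = Some x" using A[OF xX] ii(2,4) by blast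
    then have ax: "act g x = Some x'" using ii(1) by metis
    have gM: "g \<in> Mor G" using ii(2) C(1) by blast
    have "\<exists>h\<in>Mor G. composable G p h \<and> act h x \<noteq> None \<and> p = comp G p h \<and> act h x = Some x'"
      using gM assms(6) ax e1 by (intro bexI[of _ g]) auto
    then show ?thesis using e1 e2 unfolding sim_rel_def by simp
  qed
qed

end
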